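(* Let $R$ be a commutative ring with unit, let $Q$ be a labelled quiver with labels $X$ and let $F\subseteq R\langle X\rangle_Q$. If $G\subseteq R\langle X\rangle_Q$ is a set of $Q$-consequences of $F$, then any $Q$-consequence of $G$ is also a $Q$-consequence of $F$.
   Context: $R\langle X\rangle$ is the free algebra of noncommutative polynomials over $R$ in indeterminates $X$, with monomials the words in $\langle X\rangle$ (including the empty word $1$); $\operatorname{supp}(f)$ is the set of monomials with nonzero coefficient. A labelled quiver $Q=(V,E,X,s,t,l)$ has vertices $V$, edges $E$, source/target maps $s,t:E\to V$ and labelling $l:E\to X$. A nonempty path $p=e_n\cdots e_1$ (with $s(e_{i+1})=t(e_i)$) has label $l(e_n)\cdots l(e_1)$, source $s(e_1)$, target $t(e_n)$; each vertex $v$ has an empty path with label $1$ and source and target $v$. For a monomial $m$, $\sigma(m)=\{(s(p),t(p)) : p \text{ a path with } l(p)=m\}$; for a polynomial $f$, $\sigma(f)=\bigcap_{m\in\operatorname{supp}(f)}\sigma(m)$ (so $\sigma(0)=V\times V$). $f$ is compatible with $Q$ if $\sigma(f)\neq\emptyset$, and uniformly compatible if it is compatible and all $m\in\operatorname{supp}(f)$ have the same set $\sigma(m)$; $R\langle X\rangle_Q$ is the set of uniformly compatible polynomials. For $F\subseteq R\langle X\rangle_Q$, a polynomial $f$ is a $Q$-consequence of $F$ if $f$ is compatible with $Q$ and there are finitely many $a_i,b_i\in R\langle X\rangle_Q$ and $f_i\in F$ with $f=\sum_i a_if_ib_i$ and $\sigma(a_if_ib_i)\supseteq\sigma(f)$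 for every $i$ (the empty sum is allowed). *)

theory Defs
  imports Main
begin

text \<open>Noncommutative polynomials over R in indeterminates of type 'x: functions from
words ('x list, the empty list being the empty word 1, concatenation being the product
of monomials) to coefficients.\<close>

type_synonym ('x, 'r) ncpoly = "'x list \<Rightarrow> 'r"

definition supp :: "('x, 'r::zero) ncpoly \<Rightarrow> 'x list set" where
  "supp f = {m. f m \<noteq> 0}"

definition free_alg :: "('x, 'r::zero) ncpoly set" where
  "free_alg = {f. finite (supp f)}"

definition ncmult :: "('x, 'r::comm_ring_1) ncpoly \<Rightarrow> ('x, 'r) ncpoly \<Rightarrow> ('x, 'r) ncpoly" where
  "ncmult f g = (\<lambda>m. \<Sum>(u, v) \<in> {(u, v). u @ v = m}. f u * g v)"

definition quiver :: "'v set \<Rightarrow> 'e set \<Rightarrow> ('e \<Rightarrow> 'v) \<Rightarrow> ('e \<Rightarrow> 'v) \<Rightarrow> bool" where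
  "quiver V E s t \<longleftrightarrow> (\<forall>e\<in>E. s e \<in> V \<and> t e \<in> V)"

text \<open>A nonempty path e_n ... e_1 is the list [e_n, ..., e_1] with s(e_{i+1}) = t(e_i);
its label is l(e_n) ... l(e_1), its source s(e_1) and its target t(e_n).\<close>

definition is_path :: "'e set \<Rightarrow> ('e \<Rightarrow> 'v) \<Rightarrow> ('e \<Rightarrow> 'v) \<Rightarrow> 'e list \<Rightarrow> bool" where
  "is_path E s t p \<longleftrightarrow> p \<noteq> [] \<and> set p \<subseteq> E \<and>
     (\<forall>i. Suc i < length p \<longrightarrow> s (p ! i) = t (p ! Suc i))"

definition sigma_mon ::
  "'v set \<Rightarrow> 'e set \<Rightarrow> ('e \<Rightarrow> 'v) \<Rightarrow> ('e \<Rightarrow> 'v) \<Rightarrow> ('e \<Rightarrow> 'x) \<Rightarrow> 'x list \<Rightarrow> ('v \<times> 'v) set" where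
  "sigma_mon V E s t l m =
     {(v, v) | v. v \<in> V \<and> m = []} \<union>
     {(s (last p), t (hd p)) | p. is_path E s t p \<and> map l p = m}"

definition sigma ::
  "'v set \<Rightarrow> 'e set \<Rightarrow> ('e \<Rightarrow> 'v) \<Rightarrow> ('e \<Rightarrow> 'v) \<Rightarrow> ('e \<Rightarrow> 'x) \<Rightarrow> ('x, 'r::zero) ncpoly \<Rightarrow> ('v \<times> 'v) set" where
  "sigma V E s t l f = {uv \<in> V \<times> V. \<forall>m \<in> supp f. uv \<in> sigma_mon V E s t l m}"

definition compatible ::
  "'v set \<Rightarrow> 'e set \<Rightarrow> ('e \<Rightarrow> 'v) \<Rightarrow> ('e \<Rightarrow> 'v) \<Rightarrow> ('e \<Rightarrow> 'x) \<Rightarrow> ('x, 'r::zero) ncpoly \<Rightarrow> bool" where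
  "compatible V E s t l f \<longleftrightarrow> sigma V E s t l f \<noteq> {}"

definition unif_compatible ::
  "'v set \<Rightarrow> 'e set \<Rightarrow> ('e \<Rightarrow> 'v) \<Rightarrow> ('e \<Rightarrow> 'v) \<Rightarrow> ('e \<Rightarrow> 'x) \<Rightarrow> ('x, 'r::zero) ncpoly \<Rightarrow> bool" where
  "unif_compatible V E s t l f \<longleftrightarrow> compatible V E s t l f \<and>
     (\<forall>m \<in> supp f. \<forall>m' \<in> supp f. sigma_mon V E s t l m = sigma_mon V E s t l m')"

definition RXQ ::
  "'v set \<Rightarrow> 'e set \<Rightarrow> ('e \<Rightarrow> 'v) \<Rightarrow> ('e \<Rightarrow> 'v) \<Rightarrow> ('e \<Rightarrow> 'x) \<Rightarrow> ('x, 'r::zero) ncpoly set" where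
  "RXQ V E s t l = {f \<in> free_alg. unif_compatible V E s t l f}"

definition Q_consequence ::
  "'v set \<Rightarrow> 'e set \<Rightarrow> ('e \<Rightarrow> 'v) \<Rightarrow> ('e \<Rightarrow> 'v) \<Rightarrow> ('e \<Rightarrow> 'x) \<Rightarrow>
   ('x, 'r::comm_ring_1) ncpoly set \<Rightarrow> ('x, 'r) ncpoly \<Rightarrow> bool" where
  "Q_consequence V E s t l F f \<longleftrightarrow>
     f \<in> free_alg \<and> compatible V E s t l f \<and>
     (\<exists>(n::nat) a fs b.
        (\<forall>i<n. a i \<in> RXQ V E s t l \<and> b i \<in> RXQ V E s t l \<and> fs i \<in> F \<and>
               sigma V E s t l f \<subseteq> sigma V E s t l (ncmult (ncmult (a i) (fs i)) (b i))) \<and>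
        f = (\<lambda>m. \<Sum>i<n. ncmult (ncmult (a i) (fs i)) (b i) m))"

end

theory Submission
  imports Defs
begin


lemma pairs_eq: "{(u, v). u @ v = m} = (\<lambda>k. (take k m, drop k m)) ` {..length m}"
proof safe
  fix u v assume "m = u @ v"
  then show "(u, v) \<in> (\<lambda>k. (take k (u@v), drop k (u@v))) ` {..length (u@v)}"
    by (intro image_eqI[where x="length u"]) auto
qed auto

lemma finite_pairs: "finite {(u, v). u @ v = (m::'a list)}"
  unfolding pairs_eq by simp

lemma finite_pairs': "finite {p. fst p @ snd p = (m::'a list)}"
  using finite_pairs[of m] by (simp add: case_prod_unfold)

lemma ncmult_triple:
  fixes f g h :: "('x, 'r::comm_ring_1) ncpoly"
  shows "ncmult (ncmult f g) h m = (\<Sum>(u,v,w)\<in>{(u,v,w). u@v@w=m}. f u * g v * h w)"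
proof -
  have "ncmult (ncmult f g) h m = (\<Sum>(x,w)\<in>{(u, v). u @ v = m}. (\<Sum>(u,v)\<in>{(u, v). u @ v = x}. f u * g v) * h w)"
    by (simp add: ncmult_def)
  also have "\<dots> = (\<Sum>(x,w)\<in>{(u, v). u @ v = m}. (\<Sum>(u,v)\<in>{(u, v). u @ v = x}. f u * g v * h w))"
    by (simp add: sum_distrib_right case_prod_unfold)
  also have "\<dots> = (\<Sum>(xw,uv)\<in>Sigma {(u, v). u @ v = m} (\<lambda>xw. {(u, v). u @ v = fst xw}). f (fst uv) * g (snd uv) * h (snd xw))"
    by (subst sum.Sigma[symmetric]) (auto simp: finite_pairs finite_pairs' case_prod_unfold)
  also have "\<dots> = (\<Sum>(u,v,w)\<in>{(u,v,w). u@v@w=m}. f u * g v * h w)"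
    by (rule sum.reindex_bij_witness[where i="\<lambda>(u,v,w). ((u@v,w),(u,v))" and j="\<lambda>((x,w),(u,v)). (u,v,w)"]) auto
  finally show ?thesis .
qed

lemma ncmult_triple':
  fixes f g h :: "('x, 'r::comm_ring_1) ncpoly"
  shows "ncmult f (ncmult g h) m = (\<Sum>(u,v,w)\<in>{(u,v,w). u@v@w=m}. f u * g v * h w)"
proof -
  have "ncmult f (ncmult g h) m = (\<Sum>(u,x)\<in>{(u, v). u @ v = m}. f u * (\<Sum>(v,w)\<in>{(u, v). u @ v = x}. g v * h w))"
    by (simp add: ncmult_def)
  also have "\<dots> = (\<Sum>(u,x)\<in>{(u, v). u @ v = m}. (\<Sum>(v,w)\<in>{(u, v). u @ v = x}. f u * g v * h w))"
    by (simp add: sum_distrib_left case_prod_unfold mult.assoc)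
  also have "\<dots> = (\<Sum>(ux,vw)\<in>Sigma {(u, v). u @ v = m} (\<lambda>ux. {(u, v). u @ v = snd ux}). f (fst ux) * g (fst vw) * h (snd vw))"
    by (subst sum.Sigma[symmetric]) (auto simp: finite_pairs finite_pairs' case_prod_unfold)
  also have "\<dots> = (\<Sum>(u,v,w)\<in>{(u,v,w). u@v@w=m}. f u * g v * h w)"
    by (rule sum.reindex_bij_witness[where i="\<lambda>(u,v,w). ((u,v@w),(v,w))" and j="\<lambda>((u,x),(v,w)). (u,v,w)"]) auto
  finally show ?thesis .
qed

lemma ncmult_assoc: "ncmult (ncmult f g) h = ncmult f (ncmult g (h::('x, 'r::comm_ring_1) ncpoly))"
  by (rule ext) (simp add: ncmult_triple ncmult_triple')

lemma ncmult_sum_right: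
  "ncmult f (\<lambda>m. \<Sum>j<k. G j m) = (\<lambda>m. \<Sum>j<k. ncmult f (G j) m)"
  by (rule ext) (simp add: ncmult_def sum_distrib_left case_prod_unfold sum.swap[of _ "{..<k}"])

lemma ncmult_sum_left:
  "ncmult (\<lambda>m. \<Sum>j<k. G j m) f = (\<lambda>m. \<Sum>j<k. ncmult (G j) f m)"
  by (rule ext) (simp add: ncmult_def sum_distrib_right case_prod_unfold sum.swap[of _ "{..<k}"])

lemma ncmult_zero_left: "ncmult (\<lambda>m. 0) f = (\<lambda>m. 0)"
  by (rule ext) (simp add: ncmult_def)
lemma ncmult_zero_right: "ncmult f (\<lambda>m. 0) = (\<lambda>m. 0)"
  by (rule ext) (simp add: ncmult_def)

lemma supp_ncmult: "m \<in> supp (ncmult f g) \<Longrightarrow> \<exists>u v. m = u @ v \<and> u \<in> supp f \<and> v \<in> supp g"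
proof (rule ccontr)
  assume m: "m \<in> supp (ncmult f g)" and n: "\<not> (\<exists>u v. m = u @ v \<and> u \<in> supp f \<and> v \<in> supp g)"
  have "ncmult f g m = 0" unfolding ncmult_def
    by (rule sum.neutral) (use n in \<open>force simp: supp_def\<close>)
  with m show False by (simp add: supp_def)
qed

lemma finite_supp_ncmult: "finite (supp f) \<Longrightarrow> finite (supp g) \<Longrightarrow> finite (supp (ncmult f g))"
proof -
  assume "finite (supp f)" "finite (supp g)"
  then have "finite ((\<lambda>(u,v). u@v) ` (supp f \<times> supp g))" by simp
  moreover have "supp (ncmult f g) \<subseteq> (\<lambda>(u,v). u@v) ` (supp f \<times> supp g)"
    using supp_ncmult by fastforce
  ultimately show ?thesis by (rule finite_subset[rotated])
qed



lemma is_path_Cons: "is_path E s t (e#p) \<longleftrightarrow> e \<in> E \<and> (p = [] \<or> (is_path E s t p \<and> s e = t (hd p)))"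
proof (cases p)
  case Nil then show ?thesis by (simp add: is_path_def)
next
  case (Cons e' q)
  have "(\<forall>i. Suc i < length (e#p) \<longrightarrow> s ((e#p) ! i) = t ((e#p) ! Suc i)) \<longleftrightarrow>
        s e = t e' \<and> (\<forall>i. Suc i < length p \<longrightarrow> s (p ! i) = t (p ! Suc i))"
    using Cons by (auto simp: less_Suc_eq_0_disj)
  then show ?thesis using Cons by (auto simp: is_path_def)
qed

lemma is_path_append: "p1 \<noteq> [] \<Longrightarrow> p2 \<noteq> [] \<Longrightarrow>
  is_path E s t (p1 @ p2) \<longleftrightarrow> is_path E s t p1 \<and> is_path E s t p2 \<and> s (last p1) = t (hd p2)"
proof (induction p1)
  case Nil then show ?case by simp
next
  case (Cons e q)
  show ?case
  proof (cases q)
    case Nil then show ?thesis using Cons.prems by (simp add: is_path_Cons)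
  next
    case (Cons e' q')
    then have "q \<noteq> []" by simp
    then show ?thesis using Cons.IH[OF _ Cons.prems(2)] Cons.prems by (auto simp: is_path_Cons)
  qed
qed

lemma is_path_ends: "quiver V E s t \<Longrightarrow> is_path E s t p \<Longrightarrow> s (last p) \<in> V \<and> t (hd p) \<in> V"
  unfolding quiver_def is_path_def by (meson hd_in_set last_in_set subsetD)

lemma sigma_mon_sub: "quiver V E s t \<Longrightarrow> sigma_mon V E s t l m \<subseteq> V \<times> V"
  unfolding sigma_mon_def using is_path_ends by fastforce

lemma sigma_mon_Nil: "sigma_mon V E s t l [] = Id_on V"
  unfolding sigma_mon_def is_path_def by (auto simp: Id_on_def)

lemma sigma_mon_append:
  assumes q: "quiver V E s t"
  shows "sigma_mon V E s t l (u @ v) = sigma_mon V E s t l v O sigma_mon V E s t l u"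
proof (cases "u = [] \<or> v = []")
  case True
  then show ?thesis using sigma_mon_sub[OF q, of l] by (auto simp: sigma_mon_Nil) blast+
next
  case False
  then have uv: "u \<noteq> []" "v \<noteq> []" by auto
  show ?thesis
  proof safe
    fix x z assume "(x, z) \<in> sigma_mon V E s t l (u @ v)"
    then obtain p where p: "is_path E s t p" "map l p = u @ v" "x = s (last p)" "z = t (hd p)"
      using uv by (auto simp: sigma_mon_def)
    then obtain p1 p2 where pp: "p = p1 @ p2" "map l p1 = u" "map l p2 = v"
      by (auto simp: map_eq_append_conv)
    then have ne: "p1 \<noteq> []" "p2 \<noteq> []" using uv by auto
    have pa: "is_path E s t p1" "is_path E s t p2" "s (last p1) = t (hd p2)"
      using is_path_append[OF ne, of E s t] p pp by auto
    have "(x, t (hd p2)) \<in> sigma_mon V E s t l v"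
      unfolding sigma_mon_def using pa pp p ne by auto
    moreover have "(t (hd p2), z) \<in> sigma_mon V E s t l u"
      unfolding sigma_mon_def using pa pp p ne
      by (auto intro!: exI[where x=p1])
    ultimately show "(x, z) \<in> sigma_mon V E s t l v O sigma_mon V E s t l u" by blast
  next
    fix x y z assume "(x, y) \<in> sigma_mon V E s t l v" "(y, z) \<in> sigma_mon V E s t l u"
    then obtain p1 p2 where a: "is_path E s t p1" "map l p1 = u" "y = s (last p1)" "z = t (hd p1)"
      and b: "is_path E s t p2" "map l p2 = v" "x = s (last p2)" "y = t (hd p2)"
      using uv unfolding sigma_mon_def by blast
    then have ne: "p1 \<noteq> []" "p2 \<noteq> []" by (auto simp: is_path_def)
    have "is_path E s t (p1 @ p2)" using is_path_append[OF ne, of E s t] a b by simp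
    then show "(x, z) \<in> sigma_mon V E s t l (u @ v)"
      unfolding sigma_mon_def using a b ne
      by (auto intro!: exI[where x="p1@p2"])
  qed
qed



definition unif :: "'v set \<Rightarrow> 'e set \<Rightarrow> ('e \<Rightarrow> 'v) \<Rightarrow> ('e \<Rightarrow> 'v) \<Rightarrow> ('e \<Rightarrow> 'x) \<Rightarrow> ('x, 'r::zero) ncpoly \<Rightarrow> bool" where
  "unif V E s t l f \<longleftrightarrow> (\<forall>m \<in> supp f. \<forall>m' \<in> supp f. sigma_mon V E s t l m = sigma_mon V E s t l m')"

lemma RXQ_iff: "f \<in> RXQ V E s t l \<longleftrightarrow> finite (supp f) \<and> unif V E s t l f \<and> sigma V E s t l f \<noteq> {}"
  unfolding RXQ_def free_alg_def unif_compatible_def compatible_def unif_def by blast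

lemma sigma_sub: "sigma V E s t l f \<subseteq> V \<times> V"
  by (auto simp: sigma_def)

lemma sigma_at: "quiver V E s t \<Longrightarrow> unif V E s t l f \<Longrightarrow> m \<in> supp f \<Longrightarrow> sigma V E s t l f = sigma_mon V E s t l m"
proof -
  assume q: "quiver V E s t" and u: "unif V E s t l f" and m: "m \<in> supp f"
  have "sigma_mon V E s t l m \<subseteq> V \<times> V" by (rule sigma_mon_sub[OF q])
  moreover have "\<forall>m'\<in>supp f. sigma_mon V E s t l m' = sigma_mon V E s t l m" using u m unfolding unif_def by blast
  ultimately show ?thesis using m unfolding sigma_def by blast
qed

lemma sigma_zero: "sigma V E s t l (\<lambda>m. 0) = V \<times> V"
  by (simp add: sigma_def supp_def)

lemma zero_RXQ: "V \<noteq> {} \<Longrightarrow> (\<lambda>m. 0) \<in> RXQ V E s t l"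
  by (simp add: RXQ_iff sigma_zero) (simp add: supp_def unif_def)

lemma unif_mult: "quiver V E s t \<Longrightarrow> unif V E s t l f \<Longrightarrow> unif V E s t l g \<Longrightarrow> unif V E s t l (ncmult f g)"
  unfolding unif_def
proof (intro ballI)
  fix m m' assume a: "quiver V E s t" "\<forall>m\<in>supp f. \<forall>m'\<in>supp f. sigma_mon V E s t l m = sigma_mon V E s t l m'"
    "\<forall>m\<in>supp g. \<forall>m'\<in>supp g. sigma_mon V E s t l m = sigma_mon V E s t l m'"
    and m: "m \<in> supp (ncmult f g)" "m' \<in> supp (ncmult f g)"
  obtain u v where 1: "m = u @ v" "u \<in> supp f" "v \<in> supp g" using supp_ncmult[OF m(1)] by blast
  obtain u' v' where 2: "m' = u' @ v'" "u' \<in> supp f" "v' \<in> supp g" using supp_ncmult[OF m(2)] by blast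
  show "sigma_mon V E s t l m = sigma_mon V E s t l m'"
  proof -
    have e1: "sigma_mon V E s t l u = sigma_mon V E s t l u'" by (rule a(2)[rule_format, OF 1(2) 2(2)])
    have e2: "sigma_mon V E s t l v = sigma_mon V E s t l v'" by (rule a(3)[rule_format, OF 1(3) 2(3)])
    show ?thesis unfolding 1(1) 2(1) sigma_mon_append[OF a(1)] e1 e2 ..
  qed
qed

lemma supp_nonzero: "f \<noteq> (\<lambda>m. 0) \<Longrightarrow> \<exists>m. m \<in> supp f"
  by (auto simp: supp_def)

lemma triple:
  assumes q: "quiver V E s t" and m: "m \<in> supp (ncmult (ncmult a h) b)"
  shows "\<exists>x1 x2 x3. m = (x1 @ x2) @ x3 \<and> x1 \<in> supp a \<and> x2 \<in> supp h \<and> x3 \<in> supp b \<and>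
     sigma_mon V E s t l m = sigma_mon V E s t l x3 O (sigma_mon V E s t l x2 O sigma_mon V E s t l x1)"
proof -
  obtain y x3 where 1: "m = y @ x3" "y \<in> supp (ncmult a h)" "x3 \<in> supp b" using supp_ncmult[OF m] by blast
  obtain x1 x2 where 2: "y = x1 @ x2" "x1 \<in> supp a" "x2 \<in> supp h" using supp_ncmult[OF 1(2)] by blast
  have "sigma_mon V E s t l m = sigma_mon V E s t l x3 O (sigma_mon V E s t l x2 O sigma_mon V E s t l x1)"
    unfolding 1(1) 2(1) sigma_mon_append[OF q] ..
  then show ?thesis using 1 2 by blast
qed

lemma term_lemma:
  fixes a g b c h d :: "('x, 'r::comm_ring_1) ncpoly"
  assumes q: "quiver V E s t"
    and RX: "a \<in> RXQ V E s t l" "g \<in> RXQ V E s t l" "b \<in> RXQ V E s t l"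
       "c \<in> RXQ V E s t l" "h \<in> RXQ V E s t l" "d \<in> RXQ V E s t l"
    and S: "S \<subseteq> sigma V E s t l (ncmult (ncmult a g) b)" "S \<noteq> {}"
    and G: "sigma V E s t l g \<subseteq> sigma V E s t l (ncmult (ncmult c h) d)"
    and nz1: "ncmult (ncmult a g) b \<noteq> (\<lambda>m. 0)"
    and nz2: "ncmult (ncmult (ncmult a c) h) (ncmult d b) \<noteq> (\<lambda>m. 0)"
  shows "ncmult a c \<in> RXQ V E s t l \<and> ncmult d b \<in> RXQ V E s t l \<and>
         S \<subseteq> sigma V E s t l (ncmult (ncmult (ncmult a c) h) (ncmult d b))"
proof -
  let ?s = "sigma_mon V E s t l"
  let ?S = "sigma V E s t l"
  let ?P = "ncmult (ncmult (ncmult a c) h) (ncmult d b)"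
  have U: "unif V E s t l a" "unif V E s t l g" "unif V E s t l b"
     "unif V E s t l c" "unif V E s t l h" "unif V E s t l d"
    and Fin: "finite (supp a)" "finite (supp b)" "finite (supp c)" "finite (supp d)"
    using RX by (auto simp: RXQ_iff)
  have UP: "unif V E s t l ?P" "unif V E s t l (ncmult a c)" "unif V E s t l (ncmult d b)"
    "unif V E s t l (ncmult (ncmult a g) b)" "unif V E s t l (ncmult (ncmult c h) d)"
    using U by (simp_all add: unif_mult q)
  have Peq: "?P = ncmult (ncmult a (ncmult (ncmult c h) d)) b"
    by (simp add: ncmult_assoc)
  obtain m where m: "m \<in> supp ?P" using supp_nonzero[OF nz2] by blast
  have mP: "m \<in> supp (ncmult (ncmult a (ncmult (ncmult c h) d)) b)" using m Peq by simp
  obtain ua z ub where m2: "m = (ua @ z) @ ub" "ua \<in> supp a" "z \<in> supp (ncmult (ncmult c h) d)" "ub \<in> supp b"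
     "?s m = ?s ub O (?s z O ?s ua)"
    using triple[OF q mP, of l] by blast
  obtain m' where m': "m' \<in> supp (ncmult (ncmult a g) b)" using supp_nonzero[OF nz1] by blast
  obtain wa wg wb where m3: "m' = (wa @ wg) @ wb" "wa \<in> supp a" "wg \<in> supp g" "wb \<in> supp b"
     "?s m' = ?s wb O (?s wg O ?s wa)"
    using triple[OF q m', of l] by blast
  have e1: "?s ua = ?s wa" using U(1) m2(2) m3(2) unfolding unif_def by blast
  have e2: "?s ub = ?s wb" using U(3) m2(4) m3(4) unfolding unif_def by blast
  have "?s wg \<subseteq> ?s z"
    using G sigma_at[OF q U(2) m3(3)] sigma_at[OF q UP(5) m2(3)] by simp
  then have "?s m' \<subseteq> ?s m" using m2(5) m3(5) e1 e2 by (simp add: relcomp_mono)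
  moreover have "?S (ncmult (ncmult a g) b) = ?s m'" using sigma_at[OF q UP(4) m'] .
  moreover have SP: "?S ?P = ?s m" using sigma_at[OF q UP(1) m] .
  ultimately have Ssub: "S \<subseteq> ?S ?P" using S by auto
  obtain y1 y2 y3 where y: "m = (y1 @ y2) @ y3" "y1 \<in> supp (ncmult a c)" "y2 \<in> supp h" "y3 \<in> supp (ncmult d b)"
     "?s m = ?s y3 O (?s y2 O ?s y1)"
    using triple[OF q m, of l] by blast
  have ne: "?s m \<noteq> {}" using Ssub SP S(2) by auto
  have "?S (ncmult a c) \<noteq> {}" unfolding sigma_at[OF q UP(2) y(2)] using ne y(5) by blast
  moreover have "?S (ncmult d b) \<noteq> {}" unfolding sigma_at[OF q UP(3) y(4)] using ne y(5) by blast
  moreover have "finite (supp (ncmult a c))" "finite (supp (ncmult d b))"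
    using Fin finite_supp_ncmult by blast+
  ultimately show ?thesis using Ssub UP(2,3) unfolding RXQ_iff by blast
qed



definition rep :: "'v set \<Rightarrow> 'e set \<Rightarrow> ('e \<Rightarrow> 'v) \<Rightarrow> ('e \<Rightarrow> 'v) \<Rightarrow> ('e \<Rightarrow> 'x) \<Rightarrow>
   ('x, 'r::comm_ring_1) ncpoly set \<Rightarrow> ('v \<times> 'v) set \<Rightarrow> ('x, 'r) ncpoly \<Rightarrow> bool" where
  "rep V E s t l F S f \<longleftrightarrow> (\<exists>(n::nat) a fs b.
        (\<forall>i<n. a i \<in> RXQ V E s t l \<and> b i \<in> RXQ V E s t l \<and> fs i \<in> F \<and>
               S \<subseteq> sigma V E s t l (ncmult (ncmult (a i) (fs i)) (b i))) \<and>
        f = (\<lambda>m. \<Sum>i<n. ncmult (ncmult (a i) (fs i)) (b i) m))"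

lemma rep_empty: "rep V E s t l F S (\<lambda>m. 0)"
  unfolding rep_def by (rule exI[of _ 0]) simp

lemma rep_add:
  assumes r: "rep V E s t l F S f" and a: "a \<in> RXQ V E s t l" and b: "b \<in> RXQ V E s t l"
    and h: "h \<in> F" and S: "S \<subseteq> sigma V E s t l (ncmult (ncmult a h) b)"
  shows "rep V E s t l F S (\<lambda>m. f m + ncmult (ncmult a h) b m)"
proof -
  obtain n :: nat and A H B where 1: "\<forall>i<n. A i \<in> RXQ V E s t l \<and> B i \<in> RXQ V E s t l \<and> H i \<in> F \<and>
               S \<subseteq> sigma V E s t l (ncmult (ncmult (A i) (H i)) (B i))"
    and 2: "f = (\<lambda>m. \<Sum>i<n. ncmult (ncmult (A i) (H i)) (B i) m)"
    using r unfolding rep_def by blast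
  let ?A = "A(n := a)" let ?H = "H(n := h)" let ?B = "B(n := b)"
  have c: "\<forall>i<Suc n. ?A i \<in> RXQ V E s t l \<and> ?B i \<in> RXQ V E s t l \<and> ?H i \<in> F \<and>
               S \<subseteq> sigma V E s t l (ncmult (ncmult (?A i) (?H i)) (?B i))"
    using 1 a b h S by (auto simp: less_Suc_eq)
  have "(\<lambda>m. f m + ncmult (ncmult a h) b m) = (\<lambda>m. \<Sum>i<Suc n. ncmult (ncmult (?A i) (?H i)) (?B i) m)"
    unfolding 2 by (rule ext) (simp add: sum.lessThan_Suc)
  with c show ?thesis unfolding rep_def by blast
qed

lemma rep_sum:
  fixes k :: nat
  assumes r: "rep V E s t l F S f0"
    and T: "\<forall>j<k. ncmult (ncmult (A j) (H j)) (B j) = (\<lambda>m. 0) \<or>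
        (A j \<in> RXQ V E s t l \<and> B j \<in> RXQ V E s t l \<and> H j \<in> F \<and>
         S \<subseteq> sigma V E s t l (ncmult (ncmult (A j) (H j)) (B j)))"
  shows "rep V E s t l F S (\<lambda>m. f0 m + (\<Sum>j<k. ncmult (ncmult (A j) (H j)) (B j) m))"
  using T
proof (induction k)
  case 0 then show ?case using r by simp
next
  case (Suc k)
  then have IH: "rep V E s t l F S (\<lambda>m. f0 m + (\<Sum>j<k. ncmult (ncmult (A j) (H j)) (B j) m))" by simp
  have eq: "(\<lambda>m. f0 m + (\<Sum>j<Suc k. ncmult (ncmult (A j) (H j)) (B j) m)) =
     (\<lambda>m. (f0 m + (\<Sum>j<k. ncmult (ncmult (A j) (H j)) (B j) m)) + ncmult (ncmult (A k) (H k)) (B k) m)"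
    by (simp add: sum.lessThan_Suc add.assoc)
  from Suc.prems have "ncmult (ncmult (A k) (H k)) (B k) = (\<lambda>m. 0) \<or>
        (A k \<in> RXQ V E s t l \<and> B k \<in> RXQ V E s t l \<and> H k \<in> F \<and>
         S \<subseteq> sigma V E s t l (ncmult (ncmult (A k) (H k)) (B k)))" by simp
  then show ?case
  proof
    assume z: "ncmult (ncmult (A k) (H k)) (B k) = (\<lambda>m. 0)"
    show ?case unfolding eq z using IH by simp
  next
    assume "A k \<in> RXQ V E s t l \<and> B k \<in> RXQ V E s t l \<and> H k \<in> F \<and>
         S \<subseteq> sigma V E s t l (ncmult (ncmult (A k) (H k)) (B k))"
    then show ?case unfolding eq using rep_add[OF IH] by blast
  qed
qed

lemma distrib3:
  fixes k :: nat and a b :: "('x, 'r::comm_ring_1) ncpoly"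
  shows "ncmult (ncmult a (\<lambda>m. \<Sum>j<k. ncmult (ncmult (c j) (h j)) (d j) m)) b =
    (\<lambda>m. \<Sum>j<k. ncmult (ncmult (ncmult a (c j)) (h j)) (ncmult (d j) b) m)"
proof -
  have "ncmult (ncmult a (\<lambda>m. \<Sum>j<k. ncmult (ncmult (c j) (h j)) (d j) m)) b =
     (\<lambda>m. \<Sum>j<k. ncmult (ncmult a (ncmult (ncmult (c j) (h j)) (d j))) b m)"
    by (simp add: ncmult_sum_right ncmult_sum_left)
  also have "\<dots> = (\<lambda>m. \<Sum>j<k. ncmult (ncmult (ncmult a (c j)) (h j)) (ncmult (d j) b) m)"
    by (simp add: ncmult_assoc)
  finally show ?thesis .
qed

theorem corollary4p4:
  fixes V :: "'v set" and E :: "'e set" and s t :: "'e \<Rightarrow> 'v" and l :: "'e \<Rightarrow> 'x"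
    and F G :: "('x, 'r::comm_ring_1) ncpoly set" and f :: "('x, 'r) ncpoly"
  assumes "quiver V E s t"
    and "F \<subseteq> RXQ V E s t l"
    and "G \<subseteq> RXQ V E s t l"
    and "\<forall>g \<in> G. Q_consequence V E s t l F g"
    and "Q_consequence V E s t l G f"
  shows "Q_consequence V E s t l F f"
proof -
  note q = assms(1)
  let ?S = "sigma V E s t l f"
  obtain n :: nat and a g b where fa: "f \<in> free_alg" "compatible V E s t l f"
    and abg: "\<forall>i<n. a i \<in> RXQ V E s t l \<and> b i \<in> RXQ V E s t l \<and> g i \<in> G \<and>
               ?S \<subseteq> sigma V E s t l (ncmult (ncmult (a i) (g i)) (b i))"
    and feq: "f = (\<lambda>m. \<Sum>i<n. ncmult (ncmult (a i) (g i)) (b i) m)"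
    using assms(5) unfolding Q_consequence_def by blast
  have Sne: "?S \<noteq> {}" using fa(2) unfolding compatible_def .
  then have Vne: "V \<noteq> {}" using sigma_sub[of V E s t l f] by blast
  have ch0: "\<forall>i. \<exists>k::nat. \<exists>c h d. i < n \<longrightarrow> ((\<forall>j<k. c j \<in> RXQ V E s t l \<and> d j \<in> RXQ V E s t l \<and> h j \<in> F \<and>
               sigma V E s t l (g i) \<subseteq> sigma V E s t l (ncmult (ncmult (c j) (h j)) (d j))) \<and>
        g i = (\<lambda>m. \<Sum>j<k. ncmult (ncmult (c j) (h j)) (d j) m))"
  proof
    fix i show "\<exists>k::nat. \<exists>c h d. i < n \<longrightarrow> ((\<forall>j<k. c j \<in> RXQ V E s t l \<and> d j \<in> RXQ V E s t l \<and> h j \<in> F \<and>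
               sigma V E s t l (g i) \<subseteq> sigma V E s t l (ncmult (ncmult (c j) (h j)) (d j))) \<and>
        g i = (\<lambda>m. \<Sum>j<k. ncmult (ncmult (c j) (h j)) (d j) m))"
    proof (cases "i < n")
      case True
      then have "Q_consequence V E s t l F (g i)" using abg assms(4) by blast
      then have "\<exists>k::nat. \<exists>c h d. (\<forall>j<k. c j \<in> RXQ V E s t l \<and> d j \<in> RXQ V E s t l \<and> h j \<in> F \<and>
               sigma V E s t l (g i) \<subseteq> sigma V E s t l (ncmult (ncmult (c j) (h j)) (d j))) \<and>
        g i = (\<lambda>m. \<Sum>j<k. ncmult (ncmult (c j) (h j)) (d j) m)" unfolding Q_consequence_def by blast
      then show ?thesis by blast
    next
      case False then show ?thesis by blast
    qed
  qed
  obtain K :: "nat \<Rightarrow> nat" where ch1: "\<forall>i. \<exists>c h d. i < n \<longrightarrow> ((\<forall>j<K i. c j \<in> RXQ V E s t l \<and> d j \<in> RXQ V E s t l \<and> h j \<in> F \<and>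
               sigma V E s t l (g i) \<subseteq> sigma V E s t l (ncmult (ncmult (c j) (h j)) (d j))) \<and>
        g i = (\<lambda>m. \<Sum>j<K i. ncmult (ncmult (c j) (h j)) (d j) m))"
    using choice[OF ch0] by blast
  obtain C where ch2: "\<forall>i. \<exists>h d. i < n \<longrightarrow> ((\<forall>j<K i. C i j \<in> RXQ V E s t l \<and> d j \<in> RXQ V E s t l \<and> h j \<in> F \<and>
               sigma V E s t l (g i) \<subseteq> sigma V E s t l (ncmult (ncmult (C i j) (h j)) (d j))) \<and>
        g i = (\<lambda>m. \<Sum>j<K i. ncmult (ncmult (C i j) (h j)) (d j) m))"
    using choice[OF ch1] by blast
  obtain H where ch3: "\<forall>i. \<exists>d. i < n \<longrightarrow> ((\<forall>j<K i. C i j \<in> RXQ V E s t l \<and> d j \<in> RXQ V E s t l \<and> H i j \<in> F \<and>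
               sigma V E s t l (g i) \<subseteq> sigma V E s t l (ncmult (ncmult (C i j) (H i j)) (d j))) \<and>
        g i = (\<lambda>m. \<Sum>j<K i. ncmult (ncmult (C i j) (H i j)) (d j) m))"
    using choice[OF ch2] by blast
  obtain D where ch4: "\<forall>i. i < n \<longrightarrow> ((\<forall>j<K i. C i j \<in> RXQ V E s t l \<and> D i j \<in> RXQ V E s t l \<and> H i j \<in> F \<and>
               sigma V E s t l (g i) \<subseteq> sigma V E s t l (ncmult (ncmult (C i j) (H i j)) (D i j))) \<and>
        g i = (\<lambda>m. \<Sum>j<K i. ncmult (ncmult (C i j) (H i j)) (D i j) m))"
    using choice[OF ch3] by blast
  have KCHD: "\<And>i. i < n \<Longrightarrow> ((\<forall>j<K i. C i j \<in> RXQ V E s t l \<and> D i j \<in> RXQ V E s t l \<and> H i j \<in> F \<and>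
               sigma V E s t l (g i) \<subseteq> sigma V E s t l (ncmult (ncmult (C i j) (H i j)) (D i j))) \<and>
        g i = (\<lambda>m. \<Sum>j<K i. ncmult (ncmult (C i j) (H i j)) (D i j) m))"
    using ch4 by blast
  have main: "k \<le> n \<Longrightarrow> rep V E s t l F ?S (\<lambda>m. \<Sum>i<k. ncmult (ncmult (a i) (g i)) (b i) m)" for k :: nat
  proof (induction k)
    case 0 show ?case using rep_empty by simp
  next
    case (Suc k)
    then have kn: "k < n" and IH: "rep V E s t l F ?S (\<lambda>m. \<Sum>i<k. ncmult (ncmult (a i) (g i)) (b i) m)" by auto
    have eq: "(\<lambda>m. \<Sum>i<Suc k. ncmult (ncmult (a i) (g i)) (b i) m) =
      (\<lambda>m. (\<Sum>i<k. ncmult (ncmult (a i) (g i)) (b i) m) + ncmult (ncmult (a k) (g k)) (b k) m)"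
      by (simp add: sum.lessThan_Suc)
    show ?case
    proof (cases "ncmult (ncmult (a k) (g k)) (b k) = (\<lambda>m. 0)")
      case True
      show ?thesis unfolding eq True using IH by simp
    next
      case False
      have k1: "a k \<in> RXQ V E s t l" "b k \<in> RXQ V E s t l" "g k \<in> RXQ V E s t l"
        "?S \<subseteq> sigma V E s t l (ncmult (ncmult (a k) (g k)) (b k))"
        using abg kn assms(3) by auto
      note k2 = KCHD[OF kn]
      have geq: "ncmult (ncmult (a k) (g k)) (b k) =
        (\<lambda>m. \<Sum>j<K k. ncmult (ncmult (ncmult (a k) (C k j)) (H k j)) (ncmult (D k j) (b k)) m)"
        by (subst conjunct2[OF k2]) (rule distrib3)
      have T: "\<forall>j<K k. ncmult (ncmult (ncmult (a k) (C k j)) (H k j)) (ncmult (D k j) (b k)) = (\<lambda>m. 0) \<or>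
        (ncmult (a k) (C k j) \<in> RXQ V E s t l \<and> ncmult (D k j) (b k) \<in> RXQ V E s t l \<and> H k j \<in> F \<and>
         ?S \<subseteq> sigma V E s t l (ncmult (ncmult (ncmult (a k) (C k j)) (H k j)) (ncmult (D k j) (b k))))"
      proof (intro allI impI)
        fix j assume j: "j < K k"
        show "ncmult (ncmult (ncmult (a k) (C k j)) (H k j)) (ncmult (D k j) (b k)) = (\<lambda>m. 0) \<or>
        (ncmult (a k) (C k j) \<in> RXQ V E s t l \<and> ncmult (D k j) (b k) \<in> RXQ V E s t l \<and> H k j \<in> F \<and>
         ?S \<subseteq> sigma V E s t l (ncmult (ncmult (ncmult (a k) (C k j)) (H k j)) (ncmult (D k j) (b k))))"
        proof (cases "ncmult (ncmult (ncmult (a k) (C k j)) (H k j)) (ncmult (D k j) (b k)) = (\<lambda>m. 0)")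
          case True then show ?thesis by blast
        next
          case nz: False
          have hs: "C k j \<in> RXQ V E s t l" "D k j \<in> RXQ V E s t l" "H k j \<in> F"
            "sigma V E s t l (g k) \<subseteq> sigma V E s t l (ncmult (ncmult (C k j) (H k j)) (D k j))"
            using conjunct1[OF k2] j by blast+
          have hR: "H k j \<in> RXQ V E s t l" using hs(3) assms(2) by blast
          show ?thesis
            using term_lemma[OF q k1(1) k1(3) k1(2) hs(1) hR hs(2) k1(4) Sne hs(4) False nz] hs(3) by blast
        qed
      qed
      show ?thesis unfolding eq geq
        using rep_sum[OF IH T] by simp
    qed
  qed
  have "rep V E s t l F ?S f" using main[of n] feq by simp
  then show ?thesis using fa unfolding rep_def Q_consequence_def by blast
qed

end
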